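(* Let $\mathbb P$ be an atomless probability measure and $Y_1\le Y_2$ nonnegative random variables with $\mathbb E^{\mathbb P}(Y_1)<1<\mathbb E^{\mathbb P}(Y_2)<\infty$. Let $\overline{\mathbb Q}(A)=\sup_{\mathbb Q\in\mathcal P(\mathbb P,Y_1,Y_2)}\mathbb Q(A)$. For $A\in\mathcal F$: if $\mathbb E^{\mathbb P}(Y_2\mathds 1_A+Y_1\mathds 1_{A^c})\le1$, then $\overline{\mathbb Q}(A)=\mathbb E^{\mathbb P}(Y_2\mathds 1_A)$; if $\mathbb E^{\mathbb P}(Y_2\mathds 1_A+Y_1\mathds 1_{A^c})>1$, then $\overline{\mathbb Q}(A)=\mathbb E^{\mathbb P}(Y_2\mathds 1_B+Y_1\mathds 1_{A\setminus B})$ for any measurable $B\subseteq A$ with $\mathbb E^{\mathbb P}(Y_2\mathds 1_B+Y_1\mathds 1_{B^c})=1$ (such $B$ exist).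
   Context: $\mathcal P(\mathbb P,Y_1,Y_2)=\{\mathbb Q \text{ probability on }(\Omega,\mathcal F):\mathbb Q\ll\mathbb P,\ Y_1\le \mathrm d\mathbb Q/\mathrm d\mathbb P\le Y_2\ \mathbb P\text{-a.s.}\}$. *)

theory Defs
  imports "HOL-Probability.Probability"
begin

definition atomless :: "'a measure \<Rightarrow> bool" where
  "atomless M \<longleftrightarrow> (\<forall>A\<in>sets M. 0 < emeasure M A \<longrightarrow>
     (\<exists>B\<in>sets M. B \<subseteq> A \<and> 0 < emeasure M B \<and> emeasure M B < emeasure M A))"

definition dens_set :: "'a measure \<Rightarrow> ('a \<Rightarrow> real) \<Rightarrow> ('a \<Rightarrow> real) \<Rightarrow> 'a measure set" where
  "dens_set M Y1 Y2 = {Q. sets Q = sets M \<and> prob_space Q \<and> absolutely_continuous M Q \<and>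
     (AE x in M. ennreal (Y1 x) \<le> RN_deriv M Q x \<and> RN_deriv M Q x \<le> ennreal (Y2 x))}"

definition upper_prob :: "'a measure \<Rightarrow> ('a \<Rightarrow> real) \<Rightarrow> ('a \<Rightarrow> real) \<Rightarrow> 'a set \<Rightarrow> real" where
  "upper_prob M Y1 Y2 A = (SUP Q \<in> dens_set M Y1 Y2. measure Q A)"

end

theory Submission
  imports Defs
begin

lemma measure_density_real:
  fixes Z :: "'a \<Rightarrow> real"
  assumes [measurable]: "Z \<in> borel_measurable M" and "\<And>x. x \<in> space M \<Longrightarrow> 0 \<le> Z x"
    and [measurable]: "S \<in> sets M"
  shows "measure (density M Z) S = integral\<^sup>L M (\<lambda>x. Z x * indicator S x)"
proof -
  have "emeasure (density M Z) S = (\<integral>\<^sup>+ x. ennreal (Z x) * indicator S x \<partial>M)"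
    by (simp add: emeasure_density)
  also have "\<dots> = (\<integral>\<^sup>+ x. ennreal (Z x * indicator S x) \<partial>M)"
    by (intro nn_integral_cong) (auto simp: indicator_def)
  finally have "measure (density M Z) S = enn2real (\<integral>\<^sup>+ x. ennreal (Z x * indicator S x) \<partial>M)"
    by (simp add: measure_def)
  also have "\<dots> = integral\<^sup>L M (\<lambda>x. Z x * indicator S x)"
    using assms by (intro integral_eq_nn_integral[symmetric]) (auto simp: indicator_def)
  finally show ?thesis .
qed

lemma dens_mem:
  fixes Z Y1 Y2 :: "'a \<Rightarrow> real"
  assumes M: "prob_space M" and [measurable]: "Z \<in> borel_measurable M"
    and Y1: "\<And>x. x \<in> space M \<Longrightarrow> 0 \<le> Y1 x"
    and Zb: "\<And>x. x \<in> space M \<Longrightarrow> Y1 x \<le> Z x \<and> Z x \<le> Y2 x"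
    and int: "integrable M Z" and one: "integral\<^sup>L M Z = 1"
  shows "density M Z \<in> dens_set M Y1 Y2"
proof -
  interpret prob_space M by fact
  have Z0: "\<And>x. x \<in> space M \<Longrightarrow> 0 \<le> Z x" using Y1 Zb by (meson order.trans)
  have "density M (RN_deriv M (density M Z)) = density M Z"
    by (rule density_RN_deriv_density) simp
  then have ae: "AE x in M. RN_deriv M (density M Z) x = ennreal (Z x)"
    by (intro density_unique_iff[THEN iffD1]) auto
  have "measure (density M Z) (space M) = 1"
  proof -
    have "integral\<^sup>L M (\<lambda>x. Z x * indicator (space M) x) = integral\<^sup>L M Z"
      by (intro Bochner_Integration.integral_cong) auto
    then show ?thesis using measure_density_real[of Z M "space M"] Z0 one by simp
  qed
  moreover have "emeasure (density M Z) (space M) \<noteq> \<infinity>"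
  proof -
    have "emeasure (density M Z) (space M) = (\<integral>\<^sup>+ x. ennreal (Z x) \<partial>M)"
      by (simp add: emeasure_density)
    also have "\<dots> = (\<integral>\<^sup>+ x. ennreal \<bar>Z x\<bar> \<partial>M)"
      by (intro nn_integral_cong) (simp add: Z0)
    also have "\<dots> < \<infinity>" using int by (simp add: integrable_iff_bounded)
    finally show ?thesis by simp
  qed
  ultimately have "emeasure (density M Z) (space M) = 1"
    by (subst emeasure_eq_ennreal_measure) auto
  then have "prob_space (density M Z)"
    by (intro prob_spaceI) simp
  moreover have "absolutely_continuous M (density M Z)"
    by (rule absolutely_continuousI_density) simp
  moreover have "AE x in M. ennreal (Y1 x) \<le> RN_deriv M (density M Z) x \<and> RN_deriv M (density M Z) x \<le> ennreal (Y2 x)"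
  proof -
    have "AE x in M. Y1 x \<le> Z x \<and> Z x \<le> Y2 x" using Zb by (intro AE_I2) blast
    with ae show ?thesis by eventually_elim (simp add: ennreal_leI)
  qed
  ultimately show ?thesis unfolding dens_set_def by simp
qed

lemma dens_char:
  fixes Y1 Y2 :: "'a \<Rightarrow> real"
  assumes M: "prob_space M" and [measurable]: "Y2 \<in> borel_measurable M"
    and Y1: "\<And>x. x \<in> space M \<Longrightarrow> 0 \<le> Y1 x"
    and Y12: "\<And>x. x \<in> space M \<Longrightarrow> Y1 x \<le> Y2 x"
    and int: "integrable M Y2" and Q: "Q \<in> dens_set M Y1 Y2"
  shows "\<exists>Z. Z \<in> borel_measurable M \<and> (AE x in M. Y1 x \<le> Z x \<and> Z x \<le> Y2 x) \<and>
     (\<forall>x\<in>space M. 0 \<le> Z x) \<and> integrable M Z \<and> Q = density M Z"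
proof -
  interpret prob_space M by fact
  let ?R = "RN_deriv M Q"
  define Z where "Z x = enn2real (?R x)" for x
  have Qs: "sets Q = sets M" "absolutely_continuous M Q"
    and ae: "AE x in M. ennreal (Y1 x) \<le> ?R x \<and> ?R x \<le> ennreal (Y2 x)"
    using Q by (auto simp: dens_set_def)
  have dQ: "density M ?R = Q" using Qs by (intro density_RN_deriv)
  have Zm[measurable]: "Z \<in> borel_measurable M" unfolding Z_def by measurable
  have ae2: "AE x in M. ?R x = ennreal (Z x) \<and> Y1 x \<le> Z x \<and> Z x \<le> Y2 x"
    using ae AE_space
  proof eventually_elim
    case (elim x)
    then have y1: "0 \<le> Y1 x" "Y1 x \<le> Y2 x" using Y1 Y12 by auto
    have "?R x < \<top>" using elim by (meson ennreal_less_top order.strict_trans1)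
    then have eq: "?R x = ennreal (Z x)" unfolding Z_def by simp
    have "Z x \<ge> 0" unfolding Z_def by simp
    then show ?case using elim y1 eq by (auto simp: ennreal_le_iff)
  qed
  have "density M ?R = density M Z"
    using ae2 by (intro density_cong) auto
  then have "Q = density M Z" using dQ by simp
  moreover have "integrable M Z"
  proof (rule Bochner_Integration.integrable_bound[OF int Zm])
    show "AE x in M. norm (Z x) \<le> norm (Y2 x)"
      using ae2 by eventually_elim (auto simp: Z_def)
  qed
  ultimately show ?thesis using ae2 Zm by (auto simp: Z_def)
qed

lemma atomless_real:
  assumes "finite_measure N" "atomless N" "D \<in> sets N" "0 < measure N D"
  shows "\<exists>E\<in>sets N. E \<subseteq> D \<and> 0 < measure N E \<and> measure N E < measure N D"
proof -
  interpret finite_measure N by fact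
  have "0 < emeasure N D" using assms(4) by (simp add: emeasure_eq_measure)
  then obtain E where E: "E \<in> sets N" "E \<subseteq> D" "0 < emeasure N E" "emeasure N E < emeasure N D"
    using assms(2,3) unfolding atomless_def by blast
  then show ?thesis by (auto simp: emeasure_eq_measure ennreal_less_iff)
qed

lemma atomless_halving:
  assumes N: "finite_measure N" "atomless N" and C: "C \<in> sets N" "0 < measure N C"
  shows "\<exists>D\<in>sets N. D \<subseteq> C \<and> 0 < measure N D \<and> measure N D \<le> measure N C * (1/2)^n"
proof (induction n)
  case 0
  then show ?case using C by auto
next
  case (Suc n)
  interpret finite_measure N by fact
  from Suc obtain D where D: "D \<in> sets N" "D \<subseteq> C" "0 < measure N D" "measure N D \<le> measure N C * (1/2)^n"
    by blast
  obtain E where E: "E \<in> sets N" "E \<subseteq> D" "0 < measure N E" "measure N E < measure N D"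
    using atomless_real[OF N D(1,3)] by blast
  have add: "measure N D = measure N E + measure N (D - E)"
    using E D by (simp add: finite_measure_Diff)
  show ?case
  proof (cases "measure N E \<le> measure N D / 2")
    case True
    have "measure N E \<le> measure N C * (1/2)^n / 2" using True D(4) by linarith
    then have "measure N E \<le> measure N C * (1/2)^Suc n" by simp
    moreover have "E \<subseteq> C" using E D by blast
    ultimately show ?thesis using E by blast
  next
    case False
    have "measure N (D - E) \<le> measure N C * (1/2)^n / 2" using False D(4) add by linarith
    then have "measure N (D - E) \<le> measure N C * (1/2)^Suc n" by simp
    moreover have "0 < measure N (D - E)" using add E by linarith
    moreover have "D - E \<subseteq> C" using D by blast
    moreover have "D - E \<in> sets N" using D E by blast
    ultimately show ?thesis by blast
  qed
qed

lemma atomless_small: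
  assumes N: "finite_measure N" "atomless N" and C: "C \<in> sets N" "0 < measure N C" and e: "0 < e"
  shows "\<exists>D\<in>sets N. D \<subseteq> C \<and> 0 < measure N D \<and> measure N D < e"
proof -
  obtain n where n: "(1/2::real)^n < e / measure N C"
    using real_arch_pow_inv[of "e / measure N C" "1/2"] e C by auto
  then have "measure N C * (1/2)^n < e" using C by (simp add: field_simps)
  moreover obtain D where "D \<in> sets N" "D \<subseteq> C" "0 < measure N D" "measure N D \<le> measure N C * (1/2)^n"
    using atomless_halving[OF N C, of n] by blast
  ultimately show ?thesis by (intro bexI[of _ D]) auto
qed


lemma sierpinski:
  assumes N: "finite_measure N" "atomless N" and A: "A \<in> sets N"
    and c: "0 \<le> c" "c \<le> measure N A"
  shows "\<exists>B\<in>sets N. B \<subseteq> A \<and> measure N B = c"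
proof -
  interpret finite_measure N by fact
  define S where "S B = {measure N D | D. D \<in> sets N \<and> D \<subseteq> A - B \<and> measure N D \<le> c - measure N B}" for B
  define s where "s B = Sup (S B)" for B
  define good where "good B D \<longleftrightarrow> D \<in> sets N \<and> D \<subseteq> A - B \<and> measure N D \<le> c - measure N B \<and> s B \<le> 2 * measure N D" for B D
  define inv where "inv B \<longleftrightarrow> B \<in> sets N \<and> B \<subseteq> A \<and> measure N B \<le> c" for B
  define pick where "pick B = (SOME D. good B D)" for B
  define Bs where "Bs n = ((\<lambda>B. B \<union> pick B) ^^ n) {}" for n
  define Ds where "Ds n = pick (Bs n)" for n
  have Bs_Suc: "Bs (Suc n) = Bs n \<union> Ds n" for n by (simp add: Bs_def Ds_def)
  have Bs_0: "Bs 0 = {}" by (simp add: Bs_def)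
  have Sbdd: "bdd_above (S B)" for B
    by (rule bdd_aboveI[of _ "c - measure N B"]) (auto simp: S_def)
  have exgood: "\<exists>D. good B D" if "inv B" for B
  proof (cases "s B \<le> 0")
    case True
    then show ?thesis using that by (intro exI[of _ "{}"]) (auto simp: good_def inv_def)
  next
    case False
    have "0 \<in> S B" using that unfolding S_def inv_def
      by (auto intro!: exI[of _ "{}"])
    then have "S B \<noteq> {}" by blast
    moreover have "s B / 2 < Sup (S B)" using False by (simp add: s_def)
    ultimately obtain x where "x \<in> S B" "s B / 2 < x" by (meson less_cSupE)
    then show ?thesis unfolding S_def good_def by auto
  qed
  have pick_good: "good B (pick B)" if "inv B" for B
    unfolding pick_def using exgood[OF that] by (rule someI_ex)
  have inv_step: "inv (B \<union> pick B)" if "inv B" for B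
  proof -
    have g: "good B (pick B)" by (rule pick_good[OF that])
    have "measure N (B \<union> pick B) = measure N B + measure N (pick B)"
      using g that unfolding good_def inv_def by (intro finite_measure_Union) auto
    then show ?thesis using g that unfolding good_def inv_def by auto
  qed
  have invBs: "inv (Bs n)" for n
  proof (induction n)
    case 0 then show ?case by (simp add: Bs_0 inv_def c)
  next
    case (Suc n) then show ?case using inv_step[of "Bs n"] by (simp add: Bs_Suc Ds_def)
  qed
  have gD: "good (Bs n) (Ds n)" for n unfolding Ds_def by (rule pick_good[OF invBs])
  have Ds_sets: "Ds n \<in> sets N" for n using gD[of n] by (simp add: good_def)
  have Bs_mono: "Bs m \<subseteq> Bs n" if "m \<le> n" for m n
    using that
  proof (induction n)
    case 0 then show ?case by simp
  next
    case (Suc n) then show ?case by (auto simp: Bs_Suc le_Suc_eq)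
  qed
  have Bs_Un: "Bs n = (\<Union>k<n. Ds k)" for n
    by (induction n) (simp_all add: Bs_Suc Bs_0 lessThan_Suc sup_commute)
  have disj: "disjoint_family Ds"
    unfolding disjoint_family_on_def
  proof (intro ballI impI)
    fix m n :: nat assume "m \<noteq> n"
    then consider "m < n" | "n < m" by linarith
    then show "Ds m \<inter> Ds n = {}"
    proof cases
      case 1
      then have "Ds m \<subseteq> Bs n" using Bs_Un by auto
      moreover have "Ds n \<inter> Bs n = {}" using gD[of n] by (auto simp: good_def)
      ultimately show ?thesis by blast
    next
      case 2
      then have "Ds n \<subseteq> Bs m" using Bs_Un by auto
      moreover have "Ds m \<inter> Bs m = {}" using gD[of m] by (auto simp: good_def)
      ultimately show ?thesis by blast
    qed
  qed
  define B where "B = (\<Union>n. Ds n)"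
  have sums: "(\<lambda>n. measure N (Ds n)) sums measure N B"
    unfolding B_def using Ds_sets disj by (intro finite_measure_UNION) auto
  have Bsets: "B \<in> sets N" unfolding B_def using Ds_sets by auto
  have BA: "B \<subseteq> A" unfolding B_def using gD by (auto simp: good_def)
  have Bs_meas: "measure N (Bs n) = (\<Sum>k<n. measure N (Ds k))" for n
  proof (induction n)
    case 0 then show ?case by (simp add: Bs_0)
  next
    case (Suc n)
    have "measure N (Bs (Suc n)) = measure N (Bs n) + measure N (Ds n)"
      unfolding Bs_Suc using invBs[of n] gD[of n]
      by (intro finite_measure_Union) (auto simp: inv_def good_def)
    then show ?case using Suc by simp
  qed
  have Ble: "measure N B \<le> c"
  proof -
    have "(\<lambda>n. \<Sum>k<n. measure N (Ds k)) \<longlonglongrightarrow> measure N B"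
      using sums by (simp add: sums_def)
    moreover have "\<forall>n. (\<Sum>k<n. measure N (Ds k)) \<le> c"
      using invBs Bs_meas by (auto simp: inv_def)
    ultimately show ?thesis by (intro LIMSEQ_le_const2) auto
  qed
  have BsB: "Bs n \<subseteq> B" for n unfolding B_def Bs_Un by auto
  have "measure N B = c"
  proof (rule ccontr)
    assume "measure N B \<noteq> c"
    then have lt: "measure N B < c" using Ble by simp
    have "measure N (A - B) = measure N A - measure N B"
      using A Bsets BA by (simp add: finite_measure_Diff)
    then have "0 < measure N (A - B)" using lt c by simp
    then obtain D where D: "D \<in> sets N" "D \<subseteq> A - B" "0 < measure N D" "measure N D < c - measure N B"
      using atomless_small[OF N _ _, of "A - B" "c - measure N B"] A Bsets lt by auto
    have le2: "measure N D \<le> 2 * measure N (Ds n)" for n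
    proof -
      have "measure N (Bs n) \<le> measure N B"
        using BsB invBs Bsets by (intro finite_measure_mono) (auto simp: inv_def)
      then have "measure N D \<in> S (Bs n)"
        unfolding S_def using D BsB[of n] by (intro CollectI exI[of _ D]) auto
      then have "measure N D \<le> s (Bs n)" unfolding s_def by (intro cSup_upper Sbdd)
      then show ?thesis using gD[of n] by (simp add: good_def)
    qed
    moreover have "(\<lambda>n. measure N (Ds n)) \<longlonglongrightarrow> 0"
      using sums by (intro summable_LIMSEQ_zero) (auto simp: sums_iff)
    then have "eventually (\<lambda>n. measure N (Ds n) < measure N D / 2) sequentially"
      using D(3) by (intro order_tendstoD) auto
    then obtain n where "measure N (Ds n) < measure N D / 2" by (auto dest: eventually_happens)
    then show False using le2[of n] by linarith
  qed
  then show ?thesis using Bsets BA by blast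
qed


lemma upper_prob_eq:
  fixes Y1 Y2 :: "'a \<Rightarrow> real"
  assumes M: "prob_space M" and [measurable]: "Y2 \<in> borel_measurable M"
    and Y1: "\<And>x. x \<in> space M \<Longrightarrow> 0 \<le> Y1 x"
    and Y12: "\<And>x. x \<in> space M \<Longrightarrow> Y1 x \<le> Y2 x"
    and int: "integrable M Y2" and A[measurable]: "A \<in> sets M"
    and Z0[measurable]: "Z0 \<in> borel_measurable M"
    and Z0b: "\<And>x. x \<in> space M \<Longrightarrow> Y1 x \<le> Z0 x \<and> Z0 x \<le> Y2 x"
    and Z0i: "integrable M Z0" and Z01: "integral\<^sup>L M Z0 = 1"
    and Z0v: "integral\<^sup>L M (\<lambda>x. Z0 x * indicator A x) = v"
    and ub: "\<And>Z. Z \<in> borel_measurable M \<Longrightarrow> (AE x in M. Y1 x \<le> Z x \<and> Z x \<le> Y2 x) \<Longrightarrow>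
       (\<forall>x\<in>space M. 0 \<le> Z x) \<Longrightarrow> integrable M Z \<Longrightarrow> integral\<^sup>L M Z = 1 \<Longrightarrow>
       integral\<^sup>L M (\<lambda>x. Z x * indicator A x) \<le> v"
  shows "upper_prob M Y1 Y2 A = v"
  unfolding upper_prob_def
proof (rule cSup_eq_maximum)
  have Zpos: "\<And>x. x \<in> space M \<Longrightarrow> 0 \<le> Z0 x" using Y1 Z0b by (meson order.trans)
  have "density M Z0 \<in> dens_set M Y1 Y2"
    by (rule dens_mem[OF M Z0 Y1 Z0b Z0i Z01])
  moreover have "measure (density M Z0) A = v"
    using measure_density_real[OF Z0 Zpos A] Z0v by simp
  ultimately show "v \<in> (\<lambda>Q. measure Q A) ` dens_set M Y1 Y2" by force
next
  fix y assume "y \<in> (\<lambda>Q. measure Q A) ` dens_set M Y1 Y2"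
  then obtain Q where Q: "Q \<in> dens_set M Y1 Y2" and y: "y = measure Q A" by blast
  obtain Z where Z[measurable]: "Z \<in> borel_measurable M" and Zb: "AE x in M. Y1 x \<le> Z x \<and> Z x \<le> Y2 x"
    and Zp: "\<forall>x\<in>space M. 0 \<le> Z x" and Zi: "integrable M Z" and QZ: "Q = density M Z"
    using dens_char[OF M _ Y1 Y12 int Q] by auto
  have "prob_space Q" using Q by (simp add: dens_set_def)
  then have "measure Q (space M) = 1"
    using prob_space.prob_space[of Q] by (simp add: QZ)
  then have "integral\<^sup>L M (\<lambda>x. Z x * indicator (space M) x) = 1"
    using measure_density_real[OF Z _ sets.top[of M]] Zp QZ by simp
  moreover have "integral\<^sup>L M (\<lambda>x. Z x * indicator (space M) x) = integral\<^sup>L M Z"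
    by (intro Bochner_Integration.integral_cong) auto
  ultimately have "integral\<^sup>L M Z = 1" by simp
  then have "integral\<^sup>L M (\<lambda>x. Z x * indicator A x) \<le> v" using ub[OF Z Zb Zp Zi] by simp
  moreover have "y = integral\<^sup>L M (\<lambda>x. Z x * indicator A x)"
    using y QZ measure_density_real[OF Z _ A] Zp by simp
  ultimately show "y \<le> v" by simp
qed


lemma density_finite:
  fixes W :: "'a \<Rightarrow> real"
  assumes [measurable]: "W \<in> borel_measurable M" and W0: "\<And>x. x \<in> space M \<Longrightarrow> 0 \<le> W x"
    and Wi: "integrable M W"
  shows "finite_measure (density M W)"
proof (rule finite_measureI)
  have "emeasure (density M W) (space (density M W)) = (\<integral>\<^sup>+ x. ennreal (W x) \<partial>M)"
    by (simp add: emeasure_density cong: nn_integral_cong)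
  also have "\<dots> = (\<integral>\<^sup>+ x. ennreal \<bar>W x\<bar> \<partial>M)"
    by (intro nn_integral_cong) (simp add: W0)
  also have "\<dots> < \<infinity>" using Wi by (simp add: integrable_iff_bounded)
  finally show "emeasure (density M W) (space (density M W)) \<noteq> \<infinity>" by simp
qed

lemma pos_int:
  fixes W :: "'a \<Rightarrow> real"
  assumes M: "finite_measure M" and [measurable]: "W \<in> borel_measurable M" and W0: "\<And>x. x \<in> space M \<Longrightarrow> 0 \<le> W x"
    and Wi: "integrable M W" and S[measurable]: "S \<in> sets M" and Sp: "\<And>x. x \<in> S \<Longrightarrow> 0 < W x"
    and mS: "0 < measure M S"
  shows "0 < integral\<^sup>L M (\<lambda>x. W x * indicator S x)"
proof -
  interpret finite_measure M by fact
  have i: "integrable M (\<lambda>x. W x * indicator S x)" using Wi by (intro integrable_real_mult_indicator) auto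
  have nn: "AE x in M. 0 \<le> W x * indicator S x" using W0 by (intro AE_I2) (simp add: indicator_def)
  have "integral\<^sup>L M (\<lambda>x. W x * indicator S x) \<noteq> 0"
  proof
    assume "integral\<^sup>L M (\<lambda>x. W x * indicator S x) = 0"
    then have "AE x in M. W x * indicator S x = 0" using integral_nonneg_eq_0_iff_AE[OF i nn] by simp
    then have "AE x in M. x \<notin> S"
      by eventually_elim (use Sp in \<open>force simp: indicator_def split: if_splits\<close>)
    then have "emeasure M S = 0"
      using AE_iff_measurable[OF S, of "\<lambda>x. x \<notin> S"] sets.sets_into_space[OF S] by auto
    then show False using mS by (simp add: emeasure_eq_measure)
  qed
  moreover have "0 \<le> integral\<^sup>L M (\<lambda>x. W x * indicator S x)" using nn by (rule integral_nonneg_AE)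
  ultimately show ?thesis by simp
qed

lemma nu_atomless:
  fixes W :: "'a \<Rightarrow> real"
  assumes M: "prob_space M" and aM: "atomless M" and [measurable]: "W \<in> borel_measurable M"
    and W0: "\<And>x. x \<in> space M \<Longrightarrow> 0 \<le> W x" and Wi: "integrable M W"
  shows "atomless (density M W)"
proof -
  interpret prob_space M by fact
  have fM: "finite_measure M" by unfold_locales
  have fN: "finite_measure (density M W)" by (rule density_finite) fact+
  interpret N: finite_measure "density M W" by fact
  have mN: "measure (density M W) S = integral\<^sup>L M (\<lambda>x. W x * indicator S x)" if "S \<in> sets M" for S
    using measure_density_real[OF _ W0 that] by simp
  have ar: "\<exists>E\<in>sets (density M W). E \<subseteq> C \<and> 0 < measure (density M W) E \<and> measure (density M W) E < measure (density M W) C"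
    if C[measurable]: "C \<in> sets M" and Cp: "0 < measure (density M W) C" for C
  proof -
    define P where "P = {x\<in>space M. 0 < W x}"
    have P[measurable]: "P \<in> sets M" unfolding P_def by measurable
    define C' where "C' = C \<inter> P"
    have C'[measurable]: "C' \<in> sets M" unfolding C'_def by simp
    have eqC: "integral\<^sup>L M (\<lambda>x. W x * indicator C x) = integral\<^sup>L M (\<lambda>x. W x * indicator C' x)"
      by (intro Bochner_Integration.integral_cong) (auto simp: C'_def P_def indicator_def dest: W0 order.antisym)
    have "0 < measure M C'"
    proof (rule ccontr)
      assume "\<not> 0 < measure M C'"
      then have "measure M C' = 0" using measure_nonneg[of M C'] by linarith
      then have "C' \<in> null_sets M" by (simp add: null_setsI emeasure_eq_measure)
      then have "AE x in M. x \<notin> C'" by (rule AE_not_in)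
      then have "AE x in M. W x * indicator C' x = 0" by eventually_elim simp
      then have "integral\<^sup>L M (\<lambda>x. W x * indicator C' x) = 0" by (rule integral_eq_zero_AE)
      then show False using Cp mN[OF C] eqC by simp
    qed
    then obtain B where B[measurable]: "B \<in> sets M" "B \<subseteq> C'" "0 < measure M B" "measure M B < measure M C'"
      using atomless_real[OF fM aM C'] by auto
    have "measure M (C' - B) = measure M C' - measure M B" using B by (simp add: finite_measure_Diff)
    then have D: "0 < measure M (C' - B)" using B by simp
    have Cpos: "\<And>x. x \<in> C' \<Longrightarrow> 0 < W x" by (auto simp: C'_def P_def)
    have nB: "0 < measure (density M W) B"
      using pos_int[OF fM _ W0 Wi B(1) _ B(3)] Cpos B(2) mN[OF B(1)] by auto
    have nD: "0 < measure (density M W) (C' - B)"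
      using pos_int[OF fM _ W0 Wi _ _ D] Cpos mN[of "C' - B"] by auto
    have "measure (density M W) (C' - B) = measure (density M W) C' - measure (density M W) B"
      using B by (intro N.finite_measure_Diff) auto
    moreover have "measure (density M W) C' = measure (density M W) C" using mN eqC by simp
    ultimately show ?thesis using nB nD B(2) by (intro bexI[of _ B]) (auto simp: C'_def)
  qed
  show ?thesis unfolding atomless_def
  proof (intro ballI impI)
    fix C assume C: "C \<in> sets (density M W)" and "0 < emeasure (density M W) C"
    then have "0 < measure (density M W) C" by (simp add: N.emeasure_eq_measure)
    then obtain E where "E \<in> sets (density M W)" "E \<subseteq> C" "0 < measure (density M W) E" "measure (density M W) E < measure (density M W) C"
      using ar[of C] C by auto
    then show "\<exists>B\<in>sets (density M W). B \<subseteq> C \<and> 0 < emeasure (density M W) B \<and> emeasure (density M W) B < emeasure (density M W) C"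
      by (intro bexI[of _ E]) (auto simp: N.emeasure_eq_measure ennreal_less_iff)
  qed
qed

theorem mainTheorem8:
  fixes M :: "'a measure" and Y1 Y2 :: "'a \<Rightarrow> real" and A :: "'a set"
  assumes "prob_space M"
    and "atomless M"
    and "Y1 \<in> borel_measurable M" and "Y2 \<in> borel_measurable M"
    and "\<And>x. x \<in> space M \<Longrightarrow> 0 \<le> Y1 x"
    and "\<And>x. x \<in> space M \<Longrightarrow> Y1 x \<le> Y2 x"
    and "integrable M Y2"
    and "integral\<^sup>L M Y1 < 1" and "1 < integral\<^sup>L M Y2"
    and "A \<in> sets M"
  shows "(integral\<^sup>L M (\<lambda>x. Y2 x * indicator A x + Y1 x * indicator (space M - A) x) \<le> 1 \<longrightarrow>
            upper_prob M Y1 Y2 A = integral\<^sup>L M (\<lambda>x. Y2 x * indicator A x))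
       \<and> (integral\<^sup>L M (\<lambda>x. Y2 x * indicator A x + Y1 x * indicator (space M - A) x) > 1 \<longrightarrow>
            (\<exists>B\<in>sets M. B \<subseteq> A \<and>
               integral\<^sup>L M (\<lambda>x. Y2 x * indicator B x + Y1 x * indicator (space M - B) x) = 1)
          \<and> (\<forall>B\<in>sets M. B \<subseteq> A \<longrightarrow>
               integral\<^sup>L M (\<lambda>x. Y2 x * indicator B x + Y1 x * indicator (space M - B) x) = 1 \<longrightarrow>
               upper_prob M Y1 Y2 A = integral\<^sup>L M (\<lambda>x. Y2 x * indicator B x + Y1 x * indicator (A - B) x)))"
proof -
  note Y1m[measurable] = assms(3) and Y2m[measurable] = assms(4) and A[measurable] = assms(10)
  note M = assms(1) and Y1p = assms(5) and Y12 = assms(6) and Y2i = assms(7)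
  interpret prob_space M by fact
  have fM: "finite_measure M" by unfold_locales
  have Y1i: "integrable M Y1"
    by (rule Bochner_Integration.integrable_bound[OF Y2i Y1m]) (auto intro!: AE_I2 simp: Y1p Y12 abs_of_nonneg dest: Y1p Y12 intro: order_trans)
  define W where "W x = Y2 x - Y1 x" for x
  have Wm[measurable]: "W \<in> borel_measurable M" unfolding W_def by measurable
  have W0: "\<And>x. x \<in> space M \<Longrightarrow> 0 \<le> W x" using Y12 by (simp add: W_def)
  have Wi: "integrable M W" unfolding W_def using Y1i Y2i by auto
  define I where "I S = integral\<^sup>L M (\<lambda>x. W x * indicator S x)" for S
  define a where "a = integral\<^sup>L M Y1"
  have F: "integral\<^sup>L M (\<lambda>x. Y2 x * indicator S x + Y1 x * indicator (space M - S) x) = a + I S"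
    if S[measurable]: "S \<in> sets M" for S
  proof -
    have "integral\<^sup>L M (\<lambda>x. Y2 x * indicator S x + Y1 x * indicator (space M - S) x)
        = integral\<^sup>L M (\<lambda>x. Y1 x + W x * indicator S x)"
      by (intro Bochner_Integration.integral_cong) (auto simp: W_def indicator_def)
    also have "\<dots> = a + I S" unfolding a_def I_def
      using Y1i Wi by (intro Bochner_Integration.integral_add integrable_real_mult_indicator) auto
    finally show ?thesis .
  qed
  have Ipos: "0 \<le> I S" for S unfolding I_def
    by (intro integral_nonneg_AE AE_I2) (simp add: W0 indicator_def)
  have Isum: "I S + I (space M - S) = integral\<^sup>L M W" if [measurable]: "S \<in> sets M" for S
  proof -
    have "I S + I (space M - S) = integral\<^sup>L M (\<lambda>x. W x * indicator S x + W x * indicator (space M - S) x)"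
      unfolding I_def using Wi by (intro Bochner_Integration.integral_add[symmetric] integrable_real_mult_indicator) auto
    also have "\<dots> = integral\<^sup>L M W"
      by (intro Bochner_Integration.integral_cong) (auto simp: indicator_def)
    finally show ?thesis .
  qed
  have intW: "integral\<^sup>L M W = integral\<^sup>L M Y2 - a"
    unfolding W_def a_def using Y1i Y2i by (simp add: Bochner_Integration.integral_diff)
  have mN: "measure (density M W) S = I S" if "S \<in> sets M" for S
    unfolding I_def using measure_density_real[OF Wm W0 that] by simp
  have part1: "upper_prob M Y1 Y2 A = integral\<^sup>L M (\<lambda>x. Y2 x * indicator A x)"
    if h: "a + I A \<le> 1"
  proof -
    have IAc: "I (space M - A) > 1 - a - I A"
      using Isum[OF A] intW assms(9) h by linarith
    define t where "t = (1 - a - I A) / I (space M - A)"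
    have t0: "0 \<le> t" using h IAc unfolding t_def by simp
    have t1: "t \<le> 1" using h IAc unfolding t_def by (simp add: divide_le_eq_1)
    have tI: "t * I (space M - A) = 1 - a - I A" using IAc h unfolding t_def by simp
    define Z where "Z x = Y1 x + W x * indicator A x + t * (W x * indicator (space M - A) x)" for x
    have Zm[measurable]: "Z \<in> borel_measurable M" unfolding Z_def by measurable
    have Zb: "Y1 x \<le> Z x \<and> Z x \<le> Y2 x" if "x \<in> space M" for x
    proof (cases "x \<in> A")
      case True then show ?thesis using that W0[OF that] by (simp add: Z_def W_def indicator_def)
    next
      case False
      have "t * W x \<le> 1 * W x" using t1 W0[OF that] by (intro mult_right_mono) auto
      moreover have "0 \<le> t * W x" using t0 W0[OF that] by simp
      ultimately show ?thesis using False that by (simp add: Z_def W_def indicator_def)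
    qed
    have i1: "integrable M (\<lambda>x. W x * indicator A x)" using Wi by (intro integrable_real_mult_indicator) auto
    have i2: "integrable M (\<lambda>x. W x * indicator (space M - A) x)" using Wi by (intro integrable_real_mult_indicator) auto
    have Zi: "integrable M Z" unfolding Z_def using Y1i i1 i2 by auto
    have "integral\<^sup>L M Z = a + I A + t * I (space M - A)"
      unfolding Z_def a_def I_def using Y1i i1 i2 by simp
    then have Z1: "integral\<^sup>L M Z = 1" using tI by simp
    have ZA: "integral\<^sup>L M (\<lambda>x. Z x * indicator A x) = integral\<^sup>L M (\<lambda>x. Y2 x * indicator A x)"
      by (intro Bochner_Integration.integral_cong) (auto simp: Z_def W_def indicator_def)
    show ?thesis
    proof (rule upper_prob_eq[OF M Y2m Y1p Y12 Y2i A Zm Zb Zi Z1 ZA])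
      fix Z' assume Z'[measurable]: "Z' \<in> borel_measurable M" and Z'b: "AE x in M. Y1 x \<le> Z' x \<and> Z' x \<le> Y2 x"
        and "\<forall>x\<in>space M. 0 \<le> Z' x" and Z'i: "integrable M Z'" and "integral\<^sup>L M Z' = 1"
      show "integral\<^sup>L M (\<lambda>x. Z' x * indicator A x) \<le> integral\<^sup>L M (\<lambda>x. Y2 x * indicator A x)"
      proof (rule integral_mono_AE)
        show "integrable M (\<lambda>x. Z' x * indicator A x)" using Z'i by (intro integrable_real_mult_indicator) auto
        show "integrable M (\<lambda>x. Y2 x * indicator A x)" using Y2i by (intro integrable_real_mult_indicator) auto
        show "AE x in M. Z' x * indicator A x \<le> Y2 x * indicator A x"
          using Z'b by eventually_elim (simp add: indicator_def)
      qed
    qed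
  qed
  have part2: "\<exists>B\<in>sets M. B \<subseteq> A \<and> a + I B = 1" if h: "a + I A > 1"
  proof -
    have "\<exists>B\<in>sets (density M W). B \<subseteq> A \<and> measure (density M W) B = 1 - a"
      using sierpinski[OF density_finite[OF Wm W0 Wi] nu_atomless[OF M assms(2) Wm W0 Wi], of A "1 - a"]
        h assms(8) mN[OF A] unfolding a_def by auto
    then show ?thesis using mN by auto
  qed
  have part3: "upper_prob M Y1 Y2 A = integral\<^sup>L M (\<lambda>x. Y2 x * indicator B x + Y1 x * indicator (A - B) x)"
    if B[measurable]: "B \<in> sets M" and BA: "B \<subseteq> A" and hB: "a + I B = 1" for B
  proof -
    define Z where "Z x = Y2 x * indicator B x + Y1 x * indicator (space M - B) x" for x
    have Zm[measurable]: "Z \<in> borel_measurable M" unfolding Z_def by measurable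
    have Zb: "Y1 x \<le> Z x \<and> Z x \<le> Y2 x" if "x \<in> space M" for x
      using Y12[OF that] that by (simp add: Z_def indicator_def)
    have Zi: "integrable M Z" unfolding Z_def using Y1i Y2i
      by (intro Bochner_Integration.integrable_add integrable_real_mult_indicator) auto
    have Z1: "integral\<^sup>L M Z = 1" unfolding Z_def using F[OF B] hB by simp
    have ZA: "integral\<^sup>L M (\<lambda>x. Z x * indicator A x) = integral\<^sup>L M (\<lambda>x. Y2 x * indicator B x + Y1 x * indicator (A - B) x)"
      using BA by (intro Bochner_Integration.integral_cong) (auto simp: Z_def indicator_def)
    have iA: "integrable M (\<lambda>x. Y1 x * indicator (space M - A) x)" using Y1i by (intro integrable_real_mult_indicator) auto
    have iT: "integrable M (\<lambda>x. Y2 x * indicator B x + Y1 x * indicator (A - B) x)" using Y1i Y2i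
      by (intro Bochner_Integration.integrable_add integrable_real_mult_indicator) auto
    have T: "integral\<^sup>L M (\<lambda>x. Y2 x * indicator B x + Y1 x * indicator (A - B) x)
       + integral\<^sup>L M (\<lambda>x. Y1 x * indicator (space M - A) x) = 1"
    proof -
      have "integral\<^sup>L M (\<lambda>x. Y2 x * indicator B x + Y1 x * indicator (A - B) x)
       + integral\<^sup>L M (\<lambda>x. Y1 x * indicator (space M - A) x)
       = integral\<^sup>L M (\<lambda>x. (Y2 x * indicator B x + Y1 x * indicator (A - B) x) + Y1 x * indicator (space M - A) x)"
        using iT iA by (rule Bochner_Integration.integral_add[symmetric])
      also have "\<dots> = integral\<^sup>L M Z"
        using BA by (intro Bochner_Integration.integral_cong) (auto simp: Z_def indicator_def)
      finally show ?thesis using Z1 by simp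
    qed
    show ?thesis
    proof (rule upper_prob_eq[OF M Y2m Y1p Y12 Y2i A Zm Zb Zi Z1 ZA])
      fix Z' assume Z'[measurable]: "Z' \<in> borel_measurable M" and Z'b: "AE x in M. Y1 x \<le> Z' x \<and> Z' x \<le> Y2 x"
        and "\<forall>x\<in>space M. 0 \<le> Z' x" and Z'i: "integrable M Z'" and Z'1: "integral\<^sup>L M Z' = 1"
      have j1: "integrable M (\<lambda>x. Z' x * indicator A x)" using Z'i by (intro integrable_real_mult_indicator) auto
      have j2: "integrable M (\<lambda>x. Z' x * indicator (space M - A) x)" using Z'i by (intro integrable_real_mult_indicator) auto
      have "integral\<^sup>L M (\<lambda>x. Z' x * indicator A x) + integral\<^sup>L M (\<lambda>x. Z' x * indicator (space M - A) x)
          = integral\<^sup>L M (\<lambda>x. Z' x * indicator A x + Z' x * indicator (space M - A) x)"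
        using j1 j2 by (rule Bochner_Integration.integral_add[symmetric])
      also have "\<dots> = integral\<^sup>L M Z'"
        by (intro Bochner_Integration.integral_cong) (auto simp: indicator_def)
      finally have s: "integral\<^sup>L M (\<lambda>x. Z' x * indicator A x) + integral\<^sup>L M (\<lambda>x. Z' x * indicator (space M - A) x) = 1"
        using Z'1 by simp
      have "integral\<^sup>L M (\<lambda>x. Y1 x * indicator (space M - A) x) \<le> integral\<^sup>L M (\<lambda>x. Z' x * indicator (space M - A) x)"
      proof (rule integral_mono_AE[OF iA j2])
        show "AE x in M. Y1 x * indicator (space M - A) x \<le> Z' x * indicator (space M - A) x"
          using Z'b by eventually_elim (simp add: indicator_def)
      qed
      then show "integral\<^sup>L M (\<lambda>x. Z' x * indicator A x) \<le> integral\<^sup>L M (\<lambda>x. Y2 x * indicator B x + Y1 x * indicator (A - B) x)"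
        using s T by linarith
    qed
  qed
  show ?thesis
  proof (intro conjI impI)
    assume "integral\<^sup>L M (\<lambda>x. Y2 x * indicator A x + Y1 x * indicator (space M - A) x) \<le> 1"
    then show "upper_prob M Y1 Y2 A = integral\<^sup>L M (\<lambda>x. Y2 x * indicator A x)"
      using part1 F[OF A] by simp
  next
    assume "integral\<^sup>L M (\<lambda>x. Y2 x * indicator A x + Y1 x * indicator (space M - A) x) > 1"
    then show "\<exists>B\<in>sets M. B \<subseteq> A \<and> integral\<^sup>L M (\<lambda>x. Y2 x * indicator B x + Y1 x * indicator (space M - B) x) = 1"
      using part2 F[OF A] F by auto
  next
    show "\<forall>B\<in>sets M. B \<subseteq> A \<longrightarrow>
               integral\<^sup>L M (\<lambda>x. Y2 x * indicator B x + Y1 x * indicator (space M - B) x) = 1 \<longrightarrow>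
               upper_prob M Y1 Y2 A = integral\<^sup>L M (\<lambda>x. Y2 x * indicator B x + Y1 x * indicator (A - B) x)"
      using part3 F by auto
  qed
qed

end
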